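(* Let $\mathcal{G}$ be a finite groupoid (finitely many objects and finite hom-sets) and let $Q$ be the quiver arising from it, with connected components $C_1,\dots,C_k$. Let $A$ be the adjacency matrix of $Q$ and let $A_{C_1},\dots,A_{C_k}$ be the diagonal blocks of $A$ corresponding to the connected components. Then for each $i$, the matrix $A_{C_i}\otimes A_{C_i}$ satisfies the quantum Yang–Baxter equation; equivalently, there exists a scalar $\mu_i$ with $A_{C_i}^2=\mu_i A_{C_i}$. Furthermore, there exists a single scalar $\mu$ with $A^2=\mu A$ if and only if $\mu_1=\mu_2=\dots=\mu_k$.
   Context: The quiver arising from a groupoid $\mathcal{G}$ has the objects of $\mathcal{G}$ as vertices and, for objects $x,y$, one arrow from $x$ to $y$ for each morphism in $\mathrm{Hom}(x,y)$ (identities included). Its adjacency matrix is $A_{xy}=|\mathrm{Hom}(x,y)|$. Connected components are the classes of objects $x,y$ with $\mathrm{Hom}(x,y)\neq\emptyset$, and $A_{C}$ is the principal submatrix of $A$ on the objects of $C$. An $m^2\times m^2$ matrix $X$ satisfies the quantum Yang–Baxter equation if $(X\otimes I_m)(I_m\otimes X)(X\otimes I_m)=(I_m\otimes X)(X\otimes I_m)(I_m\otimes X)$, where $\otimes$ is the Kronecker product and $I_m$ the $m\times m$ identity. *)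

theory Defs
  imports "Jordan_Normal_Form.Matrix" "Jordan_Normal_Form.DL_Submatrix"
begin

text \<open>A finite groupoid with object set {0..<n}: hom-sets Hom x y, composition
  cmp g f (first f then g), identities ident x. Hom-sets of distinct pairs are disjoint.\<close>
definition finite_groupoid ::
  "nat \<Rightarrow> (nat \<Rightarrow> nat \<Rightarrow> 'm set) \<Rightarrow> ('m \<Rightarrow> 'm \<Rightarrow> 'm) \<Rightarrow> (nat \<Rightarrow> 'm) \<Rightarrow> bool" where
  "finite_groupoid n Hom cmp ident \<longleftrightarrow>
     (\<forall>x<n. \<forall>y<n. finite (Hom x y)) \<and>
     (\<forall>x<n. \<forall>y<n. \<forall>x'<n. \<forall>y'<n. (x, y) \<noteq> (x', y') \<longrightarrow> Hom x y \<inter> Hom x' y' = {}) \<and>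
     (\<forall>x<n. ident x \<in> Hom x x) \<and>
     (\<forall>x<n. \<forall>y<n. \<forall>z<n. \<forall>f\<in>Hom x y. \<forall>g\<in>Hom y z. cmp g f \<in> Hom x z) \<and>
     (\<forall>x<n. \<forall>y<n. \<forall>f\<in>Hom x y. cmp f (ident x) = f \<and> cmp (ident y) f = f) \<and>
     (\<forall>w<n. \<forall>x<n. \<forall>y<n. \<forall>z<n. \<forall>f\<in>Hom w x. \<forall>g\<in>Hom x y. \<forall>h\<in>Hom y z.
        cmp h (cmp g f) = cmp (cmp h g) f) \<and>
     (\<forall>x<n. \<forall>y<n. \<forall>f\<in>Hom x y. \<exists>g\<in>Hom y x. cmp g f = ident x \<and> cmp f g = ident y)"

definition groupoid_adj :: "nat \<Rightarrow> (nat \<Rightarrow> nat \<Rightarrow> 'm set) \<Rightarrow> real mat" where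
  "groupoid_adj n Hom = mat n n (\<lambda>(x, y). real (card (Hom x y)))"

definition groupoid_components :: "nat \<Rightarrow> (nat \<Rightarrow> nat \<Rightarrow> 'm set) \<Rightarrow> nat set set" where
  "groupoid_components n Hom = {{y. y < n \<and> Hom x y \<noteq> {}} | x. x < n}"

definition principal_submatrix :: "'a mat \<Rightarrow> nat set \<Rightarrow> 'a mat" where
  "principal_submatrix A C = submatrix A C C"

definition kronecker :: "'a::times mat \<Rightarrow> 'a mat \<Rightarrow> 'a mat" where
  "kronecker A B = mat (dim_row A * dim_row B) (dim_col A * dim_col B)
     (\<lambda>(i, j). A $$ (i div dim_row B, j div dim_col B) * B $$ (i mod dim_row B, j mod dim_col B))"

definition qybe :: "nat \<Rightarrow> 'a::comm_ring_1 mat \<Rightarrow> bool" where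
  "qybe m X \<longleftrightarrow> X \<in> carrier_mat (m^2) (m^2) \<and>
     kronecker X (1\<^sub>m m) * kronecker (1\<^sub>m m) X * kronecker X (1\<^sub>m m) =
     kronecker (1\<^sub>m m) X * kronecker X (1\<^sub>m m) * kronecker (1\<^sub>m m) X"

end

theory Submission
  imports Defs
begin


lemma card_mod_div:
  fixes m a c :: nat
  assumes "c < m" "a < m"
  shows "card {k. k < m*m*m \<and> k mod m = c \<and> k div (m*m) = a} = m"
proof -
  have eq: "{k. k < m*m*m \<and> k mod m = c \<and> k div (m*m) = a} = (\<lambda>b. a*(m*m) + b*m + c) ` {..<m}"
  proof (intro equalityI subsetI)
    fix k assume "k \<in> {k. k < m*m*m \<and> k mod m = c \<and> k div (m*m) = a}"
    then have k: "k < m*m*m" "k mod m = c" "k div (m*m) = a" by auto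
    have "k = k div (m*m) * (m*m) + k mod (m*m)" by (metis div_mult_mod_eq)
    also have "k mod (m*m) = m * (k div m mod m) + k mod m" by (rule mod_mult2_eq)
    finally have "k = a*(m*m) + (k div m mod m)*m + c" using k by (simp add: algebra_simps)
    moreover have "k div m mod m < m" using assms by simp
    ultimately show "k \<in> (\<lambda>b. a*(m*m) + b*m + c) ` {..<m}" by blast
  next
    fix k assume "k \<in> (\<lambda>b. a*(m*m) + b*m + c) ` {..<m}"
    then obtain b where b: "b < m" "k = a*(m*m) + b*m + c" by auto
    have r: "b*m + c < m*m"
    proof -
      have "b*m + c < b*m + m" using assms by simp
      also have "\<dots> = (b+1)*m" by simp
      also have "\<dots> \<le> m*m" using b by (intro mult_right_mono) auto
      finally show ?thesis .
    qed
    have "k < (a+1)*(m*m)" using b r by simp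
    also have "\<dots> \<le> m*(m*m)" using assms by (intro mult_right_mono) auto
    finally have "k < m*m*m" by (simp add: mult.assoc)
    moreover have "k mod m = c"
    proof -
      have "k = c + (a*m + b)*m" using b by (simp add: algebra_simps)
      then show ?thesis using assms by simp
    qed
    moreover have "k div (m*m) = a" using b r by (intro div_nat_eqI) (auto simp: algebra_simps)
    ultimately show "k \<in> {k. k < m*m*m \<and> k mod m = c \<and> k div (m*m) = a}" by simp
  qed
  have inj: "inj_on (\<lambda>b. a*(m*m) + b*m + c) {..<m}"
    using assms by (auto simp: inj_on_def)
  show ?thesis unfolding eq using card_image[OF inj] by simp
qed

lemma card_mod:
  fixes m c :: nat
  assumes "c < m"
  shows "card {k. k < m*m*m \<and> k mod m = c} = m*m"
proof -
  have eq: "{k. k < m*m*m \<and> k mod m = c} = (\<lambda>b. b*m + c) ` {..<m*m}"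
  proof (intro equalityI subsetI)
    fix k assume "k \<in> {k. k < m*m*m \<and> k mod m = c}"
    then have k: "k < m*m*m" "k mod m = c" by auto
    have "k = k div m * m + c" using k by (metis div_mult_mod_eq)
    moreover have "k div m < m*m" using k assms
      by (metis less_mult_imp_div_less mult.commute mult.left_commute)
    ultimately show "k \<in> (\<lambda>b. b*m + c) ` {..<m*m}" by blast
  next
    fix k assume "k \<in> (\<lambda>b. b*m + c) ` {..<m*m}"
    then obtain b where b: "b < m*m" "k = b*m + c" by auto
    have "k < b*m + m" using b assms by simp
    also have "\<dots> = (b+1)*m" by simp
    also have "\<dots> \<le> (m*m)*m" using b by (intro mult_right_mono) auto
    finally show "k \<in> {k. k < m*m*m \<and> k mod m = c}" using b assms by simp
  qed
  have inj: "inj_on (\<lambda>b. b*m + c) {..<m*m}"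
    using assms by (auto simp: inj_on_def)
  show ?thesis unfolding eq using card_image[OF inj] by simp
qed

lemma card_div:
  fixes m a :: nat
  assumes "a < m"
  shows "card {k. k < m*m*m \<and> k div (m*m) = a} = m*m"
proof -
  have eq: "{k. k < m*m*m \<and> k div (m*m) = a} = {a*(m*m)..<a*(m*m)+m*m}"
  proof (intro equalityI subsetI)
    fix k assume "k \<in> {k. k < m*m*m \<and> k div (m*m) = a}"
    then have k: "k < m*m*m" "k div (m*m) = a" by auto
    then have "m*m > 0" by (metis gr_implies_not0 less_nat_zero_code mult_is_0 neq0_conv)
    have e: "k = a*(m*m) + k mod (m*m)" using k by (metis div_mult_mod_eq add.commute)
    have "k mod (m*m) < m*m" using \<open>m*m > 0\<close> by simp
    then show "k \<in> {a*(m*m)..<a*(m*m)+m*m}" using e by (metis atLeastLessThan_iff le_add1 add_less_cancel_left)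
  next
    fix k assume k: "k \<in> {a*(m*m)..<a*(m*m)+m*m}"
    have "a*(m*m)+m*m = (a+1)*(m*m)" by simp
    also have "\<dots> \<le> m*(m*m)" using assms by (intro mult_right_mono) auto
    finally have "k < m*m*m" using k by (simp add: mult.assoc)
    moreover have "k div (m*m) = a" using k
      by (intro div_nat_eqI) (auto simp: algebra_simps)
    ultimately show "k \<in> {k. k < m*m*m \<and> k div (m*m) = a}" by simp
  qed
  show ?thesis unfolding eq by simp
qed

lemma sum_if_const:
  assumes "finite A"
  shows "(\<Sum>k\<in>A. if p k then c else 0) = of_nat (card {k\<in>A. p k}) * (c::'a::comm_ring_1)"
  using assms by (simp add: sum.inter_filter[symmetric])

lemma qybe_const:
  assumes m: "m > 0"
  shows "qybe m (mat (m*m) (m*m) (\<lambda>_. d::'a::comm_ring_1))"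
proof -
  define X where "X = mat (m*m) (m*m) (\<lambda>_. d::'a)"
  define N where "N = m*m*m"
  define P where "P = kronecker X (1\<^sub>m m)"
  define Q where "Q = kronecker (1\<^sub>m m) X"
  have P: "P = mat N N (\<lambda>(i,j). if i mod m = j mod m then d else 0)"
  proof (rule eq_matI)
    fix i j assume ij: "i < dim_row (mat N N (\<lambda>(i,j). if i mod m = j mod m then d else 0))"
      "j < dim_col (mat N N (\<lambda>(i,j). if i mod m = j mod m then d else 0))"
    then have "i < m*m*m" "j < m*m*m" by (auto simp: N_def)
    then have "i div m < m*m" "j div m < m*m" by (auto intro: less_mult_imp_div_less)
    then show "P $$ (i,j) = mat N N (\<lambda>(i,j). if i mod m = j mod m then d else 0) $$ (i,j)"
      using ij m by (simp add: P_def X_def kronecker_def N_def)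
  qed (auto simp: P_def X_def kronecker_def N_def)
  have Q: "Q = mat N N (\<lambda>(i,j). if i div (m*m) = j div (m*m) then d else 0)"
  proof (rule eq_matI)
    fix i j assume ij: "i < dim_row (mat N N (\<lambda>(i,j). if i div (m*m) = j div (m*m) then d else 0))"
      "j < dim_col (mat N N (\<lambda>(i,j). if i div (m*m) = j div (m*m) then d else 0))"
    then have "i < m*m*m" "j < m*m*m" by (auto simp: N_def)
    then have "i div (m*m) < m" "j div (m*m) < m" by (auto intro: less_mult_imp_div_less simp: mult.commute)
    then show "Q $$ (i,j) = mat N N (\<lambda>(i,j). if i div (m*m) = j div (m*m) then d else 0) $$ (i,j)"
      using ij m by (simp add: Q_def X_def kronecker_def N_def mult.commute)
  qed (auto simp: Q_def X_def kronecker_def N_def mult.commute)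
  have PQ: "P * Q = mat N N (\<lambda>_. of_nat m * (d*d))"
  proof (rule eq_matI)
    fix i j assume ij: "i < dim_row (mat N N (\<lambda>_. of_nat m * (d*d)))" "j < dim_col (mat N N (\<lambda>_. of_nat m * (d*d)))"
    then have i: "i < m*m*m" and j: "j < m*m*m" by (auto simp: N_def)
    have "(P*Q) $$ (i,j) = (\<Sum>k\<in>{0..<N}. P $$ (i,k) * Q $$ (k,j))"
      using ij by (simp add: P Q scalar_prod_def)
    also have "\<dots> = (\<Sum>k\<in>{0..<N}. if k mod m = i mod m \<and> k div (m*m) = j div (m*m) then d*d else 0)"
      using i j by (intro sum.cong) (auto simp: P Q N_def)
    also have "\<dots> = of_nat (card {k. k < m*m*m \<and> k mod m = i mod m \<and> k div (m*m) = j div (m*m)}) * (d*d)"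
      by (subst sum_if_const) (auto simp: N_def intro!: arg_cong[where f="\<lambda>S. of_nat (card S) * _"])
    also have "card {k. k < m*m*m \<and> k mod m = i mod m \<and> k div (m*m) = j div (m*m)} = m"
      using i j m by (intro card_mod_div) (auto intro: less_mult_imp_div_less simp: mult.commute)
    finally show "(P*Q) $$ (i,j) = mat N N (\<lambda>_. of_nat m * (d*d)) $$ (i,j)" using ij by simp
  qed (auto simp: P Q)
  have QP: "Q * P = mat N N (\<lambda>_. of_nat m * (d*d))"
  proof (rule eq_matI)
    fix i j assume ij: "i < dim_row (mat N N (\<lambda>_. of_nat m * (d*d)))" "j < dim_col (mat N N (\<lambda>_. of_nat m * (d*d)))"
    then have i: "i < m*m*m" and j: "j < m*m*m" by (auto simp: N_def)
    have "(Q*P) $$ (i,j) = (\<Sum>k\<in>{0..<N}. Q $$ (i,k) * P $$ (k,j))"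
      using ij by (simp add: P Q scalar_prod_def)
    also have "\<dots> = (\<Sum>k\<in>{0..<N}. if k mod m = j mod m \<and> k div (m*m) = i div (m*m) then d*d else 0)"
      using i j by (intro sum.cong) (auto simp: P Q N_def)
    also have "\<dots> = of_nat (card {k. k < m*m*m \<and> k mod m = j mod m \<and> k div (m*m) = i div (m*m)}) * (d*d)"
      by (subst sum_if_const) (auto simp: N_def intro!: arg_cong[where f="\<lambda>S. of_nat (card S) * _"])
    also have "card {k. k < m*m*m \<and> k mod m = j mod m \<and> k div (m*m) = i div (m*m)} = m"
      using i j m by (intro card_mod_div) (auto intro: less_mult_imp_div_less simp: mult.commute)
    finally show "(Q*P) $$ (i,j) = mat N N (\<lambda>_. of_nat m * (d*d)) $$ (i,j)" using ij by simp
  qed (auto simp: P Q)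
  have PQP: "P * Q * P = mat N N (\<lambda>_. of_nat m * (d*d) * (of_nat (m*m) * d))"
  proof (rule eq_matI)
    fix i j assume ij: "i < dim_row (mat N N (\<lambda>_. of_nat m * (d*d) * (of_nat (m*m) * d)))"
      "j < dim_col (mat N N (\<lambda>_. of_nat m * (d*d) * (of_nat (m*m) * d)))"
    then have i: "i < m*m*m" and j: "j < m*m*m" by (auto simp: N_def)
    have "(P*Q*P) $$ (i,j) = (\<Sum>k\<in>{0..<N}. of_nat m * (d*d) * P $$ (k,j))"
      unfolding PQ using ij by (simp add: P scalar_prod_def)
    also have "\<dots> = of_nat m * (d*d) * (\<Sum>k\<in>{0..<N}. if k mod m = j mod m then d else 0)"
      using i j by (simp add: sum_distrib_left P N_def)
    also have "(\<Sum>k\<in>{0..<N}. if k mod m = j mod m then d else 0) = of_nat (card {k. k < m*m*m \<and> k mod m = j mod m}) * d"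
      by (subst sum_if_const) (auto simp: N_def intro!: arg_cong[where f="\<lambda>S. of_nat (card S) * _"])
    also have "card {k. k < m*m*m \<and> k mod m = j mod m} = m*m"
      using m by (intro card_mod) auto
    finally show "(P*Q*P) $$ (i,j) = mat N N (\<lambda>_. of_nat m * (d*d) * (of_nat (m*m) * d)) $$ (i,j)" using ij by simp
  qed (auto simp: P Q PQ)
  have QPQ: "Q * P * Q = mat N N (\<lambda>_. of_nat m * (d*d) * (of_nat (m*m) * d))"
  proof (rule eq_matI)
    fix i j assume ij: "i < dim_row (mat N N (\<lambda>_. of_nat m * (d*d) * (of_nat (m*m) * d)))"
      "j < dim_col (mat N N (\<lambda>_. of_nat m * (d*d) * (of_nat (m*m) * d)))"
    then have i: "i < m*m*m" and j: "j < m*m*m" by (auto simp: N_def)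
    have "(Q*P*Q) $$ (i,j) = (\<Sum>k\<in>{0..<N}. of_nat m * (d*d) * Q $$ (k,j))"
      unfolding QP using ij by (simp add: Q scalar_prod_def)
    also have "\<dots> = of_nat m * (d*d) * (\<Sum>k\<in>{0..<N}. if k div (m*m) = j div (m*m) then d else 0)"
      using i j by (simp add: sum_distrib_left Q N_def)
    also have "(\<Sum>k\<in>{0..<N}. if k div (m*m) = j div (m*m) then d else 0) = of_nat (card {k. k < m*m*m \<and> k div (m*m) = j div (m*m)}) * d"
      by (subst sum_if_const) (auto simp: N_def intro!: arg_cong[where f="\<lambda>S. of_nat (card S) * _"])
    also have "card {k. k < m*m*m \<and> k div (m*m) = j div (m*m)} = m*m"
      using m j by (intro card_div) (auto intro: less_mult_imp_div_less simp: mult.commute)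
    finally show "(Q*P*Q) $$ (i,j) = mat N N (\<lambda>_. of_nat m * (d*d) * (of_nat (m*m) * d)) $$ (i,j)" using ij by simp
  qed (auto simp: Q P QP)
  show ?thesis unfolding qybe_def
    using PQP QPQ by (simp add: P_def[symmetric] Q_def[symmetric] X_def[symmetric] power2_eq_square)
      (simp add: X_def)
qed



lemma gp_comp:
  assumes "finite_groupoid n Hom cmp ident" "x<n" "y<n" "z<n" "f \<in> Hom x y" "g \<in> Hom y z"
  shows "cmp g f \<in> Hom x z"
  using assms unfolding finite_groupoid_def by (elim conjE) (simp)
lemma gp_assoc:
  assumes "finite_groupoid n Hom cmp ident" "w<n" "x<n" "y<n" "z<n" "f \<in> Hom w x" "g \<in> Hom x y" "h \<in> Hom y z"
  shows "cmp h (cmp g f) = cmp (cmp h g) f"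
  using assms unfolding finite_groupoid_def by (elim conjE) (simp)
lemma gp_idl:
  assumes "finite_groupoid n Hom cmp ident" "x<n" "y<n" "f \<in> Hom x y"
  shows "cmp f (ident x) = f" "cmp (ident y) f = f"
  using assms unfolding finite_groupoid_def by (elim conjE; simp)+
lemma gp_inv:
  assumes "finite_groupoid n Hom cmp ident" "x<n" "y<n" "f \<in> Hom x y"
  obtains g where "g \<in> Hom y x" "cmp g f = ident x" "cmp f g = ident y"
  using assms unfolding finite_groupoid_def by (elim conjE) (meson)
lemma gp_id:
  assumes "finite_groupoid n Hom cmp ident" "x<n"
  shows "ident x \<in> Hom x x"
  using assms unfolding finite_groupoid_def by (elim conjE) (simp)
lemma gp_fin:
  assumes "finite_groupoid n Hom cmp ident" "x<n" "y<n"
  shows "finite (Hom x y)"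
  using assms unfolding finite_groupoid_def by (elim conjE) (simp)

lemma card_pre:
  assumes G: "finite_groupoid n Hom cmp ident" and xyc: "x<n" "y<n" "c<n" and ne: "Hom x y \<noteq> {}"
  shows "card (Hom x c) = card (Hom y c)"
proof -
  obtain f where f: "f \<in> Hom x y" using ne by blast
  obtain g where g: "g \<in> Hom y x" "cmp g f = ident x" "cmp f g = ident y"
    using gp_inv[OF G xyc(1,2) f] by blast
  have "bij_betw (\<lambda>h. cmp h g) (Hom x c) (Hom y c)"
  proof (rule bij_betw_byWitness[where f'="\<lambda>k. cmp k f"])
    show "\<forall>h\<in>Hom x c. cmp (cmp h g) f = h"
    proof
      fix h assume h: "h \<in> Hom x c"
      have "cmp (cmp h g) f = cmp h (cmp g f)" using gp_assoc[OF G xyc(1,2,1,3) f g(1) h] by simp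
      also have "\<dots> = h" using g(2) gp_idl(1)[OF G xyc(1,3) h] by simp
      finally show "cmp (cmp h g) f = h" .
    qed
    show "\<forall>k\<in>Hom y c. cmp (cmp k f) g = k"
    proof
      fix h assume h: "h \<in> Hom y c"
      have "cmp (cmp h f) g = cmp h (cmp f g)" using gp_assoc[OF G xyc(2,1,2,3) g(1) f h] by simp
      also have "\<dots> = h" using g(3) gp_idl(1)[OF G xyc(2,3) h] by simp
      finally show "cmp (cmp h f) g = h" .
    qed
    show "(\<lambda>h. cmp h g) ` Hom x c \<subseteq> Hom y c"
      using gp_comp[OF G xyc(2,1,3) g(1)] by blast
    show "(\<lambda>k. cmp k f) ` Hom y c \<subseteq> Hom x c"
      using gp_comp[OF G xyc(1,2,3) f] by blast
  qed
  then show ?thesis by (rule bij_betw_same_card)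
qed

lemma card_post:
  assumes G: "finite_groupoid n Hom cmp ident" and xyc: "x<n" "y<n" "c<n" and ne: "Hom x y \<noteq> {}"
  shows "card (Hom c x) = card (Hom c y)"
proof -
  obtain f where f: "f \<in> Hom x y" using ne by blast
  obtain g where g: "g \<in> Hom y x" "cmp g f = ident x" "cmp f g = ident y"
    using gp_inv[OF G xyc(1,2) f] by blast
  have "bij_betw (\<lambda>h. cmp f h) (Hom c x) (Hom c y)"
  proof (rule bij_betw_byWitness[where f'="\<lambda>k. cmp g k"])
    show "\<forall>h\<in>Hom c x. cmp g (cmp f h) = h"
    proof
      fix h assume h: "h \<in> Hom c x"
      have "cmp g (cmp f h) = cmp (cmp g f) h" using gp_assoc[OF G xyc(3,1,2,1) h f g(1)] by simp
      also have "\<dots> = h" using g(2) gp_idl(2)[OF G xyc(3,1) h] by simp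
      finally show "cmp g (cmp f h) = h" .
    qed
    show "\<forall>k\<in>Hom c y. cmp f (cmp g k) = k"
    proof
      fix h assume h: "h \<in> Hom c y"
      have "cmp f (cmp g h) = cmp (cmp f g) h" using gp_assoc[OF G xyc(3,2,1,2) h g(1) f] by simp
      also have "\<dots> = h" using g(3) gp_idl(2)[OF G xyc(3,2) h] by simp
      finally show "cmp f (cmp g h) = h" .
    qed
    show "(\<lambda>h. cmp f h) ` Hom c x \<subseteq> Hom c y"
      using gp_comp[OF G xyc(3,1,2) _ f] by blast
    show "(\<lambda>k. cmp g k) ` Hom c y \<subseteq> Hom c x"
      using gp_comp[OF G xyc(3,2,1) _ g(1)] by blast
  qed
  then show ?thesis by (rule bij_betw_same_card)
qed

lemma ne_trans:
  assumes G: "finite_groupoid n Hom cmp ident" "x<n" "y<n" "z<n" "Hom x y \<noteq> {}" "Hom y z \<noteq> {}"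
  shows "Hom x z \<noteq> {}"
  using gp_comp[OF G(1-4)] G(5,6) by blast

lemma ne_sym:
  assumes G: "finite_groupoid n Hom cmp ident" "x<n" "y<n" "Hom x y \<noteq> {}"
  shows "Hom y x \<noteq> {}"
  using gp_inv[OF G(1-3)] G(4) by blast

lemma card_same:
  assumes G: "finite_groupoid n Hom cmp ident" and x: "x<n"
    and y: "y<n" "Hom x y \<noteq> {}" and z: "z<n" "Hom x z \<noteq> {}"
  shows "card (Hom y z) = card (Hom x x)"
  using card_pre[OF G x y(1) z(1) y(2)] card_post[OF G x z(1) x z(2)] by simp

lemma comp_eq:
  assumes G: "finite_groupoid n Hom cmp ident" and x: "x<n" and y: "y<n" "Hom x y \<noteq> {}"
  shows "{z. z<n \<and> Hom y z \<noteq> {}} = {z. z<n \<and> Hom x z \<noteq> {}}"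
  using ne_trans[OF G x y(1)] ne_trans[OF G y(1) x] ne_sym[OF G x y(1) y(2)] y(2) by blast

lemma card_pos:
  assumes G: "finite_groupoid n Hom cmp ident" and x: "x<n"
  shows "card (Hom x x) > 0"
  using gp_id[OF G x] gp_fin[OF G x x] card_gt_0_iff by blast



lemma adj_carrier: "groupoid_adj n Hom \<in> carrier_mat n n"
  by (simp add: groupoid_adj_def)

lemma adj_idx: "x < n \<Longrightarrow> y < n \<Longrightarrow> groupoid_adj n Hom $$ (x,y) = real (card (Hom x y))"
  by (simp add: groupoid_adj_def)

lemma psub_const:
  assumes A: "A \<in> carrier_mat n n" and C: "C \<subseteq> {..<n}" and c: "\<forall>i\<in>C. \<forall>j\<in>C. A $$ (i,j) = c"
  shows "principal_submatrix A C = mat (card C) (card C) (\<lambda>_. c)"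
proof -
  have e: "{i. i < dim_row A \<and> i \<in> C} = C" "{i. i < dim_col A \<and> i \<in> C} = C" using A C by auto
  show ?thesis
  proof (rule eq_matI)
    fix i j assume ij: "i < dim_row (mat (card C) (card C) (\<lambda>_. c))" "j < dim_col (mat (card C) (card C) (\<lambda>_. c))"
    then have "pick C i \<in> C" "pick C j \<in> C" by (auto intro: pick_in_set_le)
    then show "principal_submatrix A C $$ (i,j) = mat (card C) (card C) (\<lambda>_. c) $$ (i,j)"
      using ij c e by (simp add: principal_submatrix_def submatrix_def)
  qed (use e in \<open>auto simp: principal_submatrix_def submatrix_def\<close>)
qed

lemma const_sq: "mat m m (\<lambda>_. a) * mat m m (\<lambda>_. a) = mat m m (\<lambda>_. real m * (a*a))"
  by (rule eq_matI) (auto simp: scalar_prod_def)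

lemma kron_const: "kronecker (mat m m (\<lambda>_. c)) (mat m m (\<lambda>_. c)) = mat (m*m) (m*m) (\<lambda>_. c*c)"
proof (rule eq_matI)
  fix i j assume ij: "i < dim_row (mat (m*m) (m*m) (\<lambda>_. c*c))" "j < dim_col (mat (m*m) (m*m) (\<lambda>_. c*c))"
  then have "i < m*m" "j < m*m" by auto
  moreover then have "m > 0" by (cases m) auto
  ultimately have "i div m < m" "j div m < m" "i mod m < m" "j mod m < m"
    by (auto intro: less_mult_imp_div_less)
  then show "kronecker (mat m m (\<lambda>_. c)) (mat m m (\<lambda>_. c)) $$ (i,j) = mat (m*m) (m*m) (\<lambda>_. c*c) $$ (i,j)"
    using ij by (simp add: kronecker_def)
qed (auto simp: kronecker_def)

lemma A_sq:
  assumes G: "finite_groupoid n Hom cmp ident" and x: "x<n" and y: "y<n"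
  shows "(groupoid_adj n Hom * groupoid_adj n Hom) $$ (x,y)
     = real (card {z. z<n \<and> Hom x z \<noteq> {}} * card (Hom x x)) * groupoid_adj n Hom $$ (x,y)"
proof -
  let ?A = "groupoid_adj n Hom"
  have "(?A * ?A) $$ (x,y) = (\<Sum>z\<in>{0..<n}. real (card (Hom x z)) * real (card (Hom z y)))"
    using x y by (simp add: groupoid_adj_def scalar_prod_def)
  also have "\<dots> = (\<Sum>z\<in>{0..<n}. if Hom x z \<noteq> {} then real (card (Hom x x)) * real (card (Hom x y)) else 0)"
  proof (rule sum.cong)
    fix z assume z: "z \<in> {0..<n}"
    show "real (card (Hom x z)) * real (card (Hom z y)) = (if Hom x z \<noteq> {} then real (card (Hom x x)) * real (card (Hom x y)) else 0)"
    proof (cases "Hom x z = {}")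
      case False
      have "card (Hom x z) = card (Hom x x)" using card_post[OF G x z[simplified] x False] by simp
      moreover have "card (Hom x y) = card (Hom z y)" using card_pre[OF G x z[simplified] y False] .
      ultimately show ?thesis using False by simp
    qed simp
  qed simp
  also have "\<dots> = real (card {z. z<n \<and> Hom x z \<noteq> {}}) * (real (card (Hom x x)) * real (card (Hom x y)))"
    by (subst sum_if_const) (auto intro!: arg_cong[where f="\<lambda>S. real (card S) * _"])
  finally show ?thesis using x y by (simp add: adj_idx)
qed

lemma comp_sub:
  assumes G: "finite_groupoid n Hom cmp ident" and x: "x<n"
  shows "principal_submatrix (groupoid_adj n Hom) {z. z<n \<and> Hom x z \<noteq> {}}
    = mat (card {z. z<n \<and> Hom x z \<noteq> {}}) (card {z. z<n \<and> Hom x z \<noteq> {}}) (\<lambda>_. real (card (Hom x x)))"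
  by (rule psub_const[OF adj_carrier]) (auto simp: adj_idx card_same[OF G x])

lemma comp_card_pos:
  assumes G: "finite_groupoid n Hom cmp ident" and x: "x<n"
  shows "card {z. z<n \<and> Hom x z \<noteq> {}} > 0"
proof -
  have "x \<in> {z. z<n \<and> Hom x z \<noteq> {}}" using gp_id[OF G x] x by auto
  moreover have "finite {z. z<n \<and> Hom x z \<noteq> {}}" by simp
  ultimately show ?thesis using card_gt_0_iff by blast
qed



lemma smult_const: "a \<cdot>\<^sub>m mat m m (\<lambda>_. c) = mat m m (\<lambda>_. a*c)"
  by (rule eq_matI) auto

lemma comps_obtain:
  assumes "C \<in> groupoid_components n Hom"
  obtains x where "x < n" "C = {z. z<n \<and> Hom x z \<noteq> {}}"
  using assms unfolding groupoid_components_def by blast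

lemma comp_in: "x < n \<Longrightarrow> {z. z<n \<and> Hom x z \<noteq> {}} \<in> groupoid_components n Hom"
  unfolding groupoid_components_def by blast

lemma mus_val:
  assumes G: "finite_groupoid n Hom cmp ident" and x: "x<n"
    and eq: "principal_submatrix (groupoid_adj n Hom) {z. z<n \<and> Hom x z \<noteq> {}} * principal_submatrix (groupoid_adj n Hom) {z. z<n \<and> Hom x z \<noteq> {}}
        = \<mu> \<cdot>\<^sub>m principal_submatrix (groupoid_adj n Hom) {z. z<n \<and> Hom x z \<noteq> {}}"
  shows "\<mu> = real (card {z. z<n \<and> Hom x z \<noteq> {}} * card (Hom x x))"
proof -
  let ?m = "card {z. z<n \<and> Hom x z \<noteq> {}}"
  let ?g = "real (card (Hom x x))"
  have m: "?m > 0" by (rule comp_card_pos[OF G x])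
  have g: "?g > 0" using card_pos[OF G x] by simp
  have "mat ?m ?m (\<lambda>_. real ?m * (?g*?g)) = mat ?m ?m (\<lambda>_. \<mu> * ?g)"
    using eq unfolding comp_sub[OF G x] const_sq smult_const .
  then have "mat ?m ?m (\<lambda>_. real ?m * (?g*?g)) $$ (0,0) = mat ?m ?m (\<lambda>_. \<mu> * ?g) $$ (0,0)" by simp
  then have "real ?m * (?g*?g) = \<mu> * ?g" using m by simp
  then have "real ?m * ?g = \<mu>" using g by (simp add: algebra_simps)
  then show ?thesis by simp
qed

theorem proposition2p12:
  fixes n :: nat and Hom :: "nat \<Rightarrow> nat \<Rightarrow> 'm set"
    and cmp :: "'m \<Rightarrow> 'm \<Rightarrow> 'm" and ident :: "nat \<Rightarrow> 'm"
  assumes "finite_groupoid n Hom cmp ident"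
  shows "(\<forall>C\<in>groupoid_components n Hom.
            qybe (card C) (kronecker (principal_submatrix (groupoid_adj n Hom) C)
                                     (principal_submatrix (groupoid_adj n Hom) C))
          \<and> (\<exists>\<mu>::real. principal_submatrix (groupoid_adj n Hom) C * principal_submatrix (groupoid_adj n Hom) C
                        = \<mu> \<cdot>\<^sub>m principal_submatrix (groupoid_adj n Hom) C))
       \<and> (\<forall>\<mu>s :: nat set \<Rightarrow> real.
            (\<forall>C\<in>groupoid_components n Hom.
               principal_submatrix (groupoid_adj n Hom) C * principal_submatrix (groupoid_adj n Hom) C
                 = \<mu>s C \<cdot>\<^sub>m principal_submatrix (groupoid_adj n Hom) C) \<longrightarrow>
            ((\<exists>\<mu>::real. groupoid_adj n Hom * groupoid_adj n Hom = \<mu> \<cdot>\<^sub>m groupoid_adj n Hom) \<longleftrightarrow>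
             (\<forall>C\<in>groupoid_components n Hom. \<forall>D\<in>groupoid_components n Hom. \<mu>s C = \<mu>s D)))"
proof (intro conjI ballI allI impI)
  note G = assms
  let ?A = "groupoid_adj n Hom"
  define nu where "nu x = real (card {z. z<n \<and> Hom x z \<noteq> {}} * card (Hom x x))" for x
  {
    fix C assume "C \<in> groupoid_components n Hom"
    then obtain x where x: "x < n" and C: "C = {z. z<n \<and> Hom x z \<noteq> {}}" by (rule comps_obtain)
    let ?g = "real (card (Hom x x))"
    have PS: "principal_submatrix ?A C = mat (card C) (card C) (\<lambda>_. ?g)"
      unfolding C by (rule comp_sub[OF G x])
    have m: "card C > 0" unfolding C by (rule comp_card_pos[OF G x])
    show "qybe (card C) (kronecker (principal_submatrix ?A C) (principal_submatrix ?A C))"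
      unfolding PS kron_const by (rule qybe_const[OF m])
    show "\<exists>\<mu>::real. principal_submatrix ?A C * principal_submatrix ?A C = \<mu> \<cdot>\<^sub>m principal_submatrix ?A C"
      by (rule exI[where x="real (card C) * ?g"]) (simp add: PS const_sq smult_const mult.assoc)
  }
  fix \<mu>s :: "nat set \<Rightarrow> real"
  assume hyp: "\<forall>C\<in>groupoid_components n Hom. principal_submatrix ?A C * principal_submatrix ?A C
                 = \<mu>s C \<cdot>\<^sub>m principal_submatrix ?A C"
  have musv: "\<mu>s {z. z<n \<and> Hom x z \<noteq> {}} = nu x" if x: "x < n" for x
    unfolding nu_def by (rule mus_val[OF G x]) (use hyp comp_in[OF x] in blast)
  show "(\<exists>\<mu>::real. ?A * ?A = \<mu> \<cdot>\<^sub>m ?A) \<longleftrightarrow>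
             (\<forall>C\<in>groupoid_components n Hom. \<forall>D\<in>groupoid_components n Hom. \<mu>s C = \<mu>s D)"
  proof
    assume "\<exists>\<mu>::real. ?A * ?A = \<mu> \<cdot>\<^sub>m ?A"
    then obtain \<mu> where mu: "?A * ?A = \<mu> \<cdot>\<^sub>m ?A" by blast
    have nux: "nu x = \<mu>" if x: "x < n" for x
    proof -
      have "(?A * ?A) $$ (x,x) = (\<mu> \<cdot>\<^sub>m ?A) $$ (x,x)" using mu by simp
      moreover have "(?A * ?A) $$ (x,x) = nu x * ?A $$ (x,x)"
        using A_sq[OF G x x] unfolding nu_def .
      moreover have "(\<mu> \<cdot>\<^sub>m ?A) $$ (x,x) = \<mu> * ?A $$ (x,x)" using x by (simp add: groupoid_adj_def)
      ultimately have "nu x * ?A $$ (x,x) = \<mu> * ?A $$ (x,x)" by simp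
      moreover have "?A $$ (x,x) > 0" using card_pos[OF G x] x by (simp add: adj_idx)
      ultimately show ?thesis by simp
    qed
    show "\<forall>C\<in>groupoid_components n Hom. \<forall>D\<in>groupoid_components n Hom. \<mu>s C = \<mu>s D"
    proof (intro ballI)
      fix C D assume C: "C \<in> groupoid_components n Hom" and D: "D \<in> groupoid_components n Hom"
      obtain x where x: "x<n" "C = {z. z<n \<and> Hom x z \<noteq> {}}" using C by (rule comps_obtain)
      obtain y where y: "y<n" "D = {z. z<n \<and> Hom y z \<noteq> {}}" using D by (rule comps_obtain)
      have "\<mu>s C = nu x" using musv[OF x(1)] x(2) by simp
      also have "\<dots> = nu y" using nux[OF x(1)] nux[OF y(1)] by simp
      also have "\<dots> = \<mu>s D" using musv[OF y(1)] y(2) by simp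
      finally show "\<mu>s C = \<mu>s D" .
    qed
  next
    assume all: "\<forall>C\<in>groupoid_components n Hom. \<forall>D\<in>groupoid_components n Hom. \<mu>s C = \<mu>s D"
    show "\<exists>\<mu>::real. ?A * ?A = \<mu> \<cdot>\<^sub>m ?A"
    proof (cases "n = 0")
      case True
      show ?thesis by (rule exI[where x=0]) (rule eq_matI, auto simp: True groupoid_adj_def)
    next
      case False
      then have n0: "0 < n" by simp
      have nux: "nu x = nu 0" if x: "x < n" for x
      proof -
        have "\<mu>s {z. z<n \<and> Hom x z \<noteq> {}} = \<mu>s {z. z<n \<and> Hom 0 z \<noteq> {}}"
          using all comp_in[OF x] comp_in[OF n0] by blast
        then show ?thesis using musv[OF x] musv[OF n0] by simp
      qed
      show ?thesis
      proof (rule exI[where x="nu 0"], rule eq_matI)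
        fix i j assume ij: "i < dim_row (nu 0 \<cdot>\<^sub>m ?A)" "j < dim_col (nu 0 \<cdot>\<^sub>m ?A)"
        then have i: "i < n" and j: "j < n" by (auto simp: groupoid_adj_def)
        have "(?A * ?A) $$ (i,j) = nu i * ?A $$ (i,j)"
          using A_sq[OF G i j] unfolding nu_def .
        moreover have "(nu 0 \<cdot>\<^sub>m ?A) $$ (i,j) = nu 0 * ?A $$ (i,j)" using i j by (simp add: groupoid_adj_def)
        ultimately show "(?A * ?A) $$ (i,j) = (nu 0 \<cdot>\<^sub>m ?A) $$ (i,j)" using nux[OF i] by simp
      qed (auto simp: groupoid_adj_def)
    qed
  qed
qed


end
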